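(* Let $L$ be an $\omega$-regular language over $\Sigma$, let $M=(\Sigma,Q,q_0,\delta)$ be a complete DFA, and let $u\in\Sigma^*$. Define the relation $\approx^u_{R'}$ on $\Sigma^*$ by $x\approx^u_{R'}y$ iff for every $v\in\Sigma^*$, $\big(M(uxv)=M(u)\wedge u(xv)^\omega\in L\big)\Leftrightarrow\big(M(uyv)=M(u)\wedge u(yv)^\omega\in L\big)$. Then the index of $\approx^u_{R'}$ is bounded by $|Q|\cdot|\approx^u_P|$, where $|\approx^u_P|$ is the index of $\approx^u_P$.
   Context: For a complete DFA $M$ and finite word $w$, $M(w)$ is the state reached from the initial state on $w$. The relation $\approx^u_P$ on $\Sigma^*$ is defined by $x\approx^u_P y$ iff for all $v\in\Sigma^*$, $u(xv)^\omega\in L\Leftrightarrow u(yv)^\omega\in L$. The index of an equivalence relation is its number of equivalence classes. *)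

theory Defs
  imports Main "HOL-Library.Omega_Words_Fun" "HOL-Library.Extended_Nat"
begin

definition buchi_lang ::
  "'a set \<Rightarrow> nat set \<Rightarrow> nat set \<Rightarrow> (nat \<times> 'a \<times> nat) set \<Rightarrow> nat set \<Rightarrow> 'a word set" where
  "buchi_lang \<Sigma> S I \<Delta> F =
     {w. (\<forall>i. w i \<in> \<Sigma>) \<and>
         (\<exists>r::nat word. r 0 \<in> I \<and> (\<forall>i. (r i, w i, r (Suc i)) \<in> \<Delta>) \<and>
                        (\<exists>\<^sub>\<infinity> i. r i \<in> F))}"

definition omega_regular :: "'a set \<Rightarrow> 'a word set \<Rightarrow> bool" where
  "omega_regular \<Sigma> L \<longleftrightarrow>
     (\<exists>S I \<Delta> F. finite S \<and> I \<subseteq> S \<and> F \<subseteq> S \<and> \<Delta> \<subseteq> S \<times> \<Sigma> \<times> S \<and>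
                L = buchi_lang \<Sigma> S I \<Delta> F)"

definition complete_dfa :: "'a set \<Rightarrow> 'q set \<Rightarrow> 'q \<Rightarrow> ('q \<Rightarrow> 'a \<Rightarrow> 'q) \<Rightarrow> bool" where
  "complete_dfa \<Sigma> Q q0 \<delta> \<longleftrightarrow> finite \<Sigma> \<and> finite Q \<and> q0 \<in> Q \<and>
     (\<forall>q\<in>Q. \<forall>a\<in>\<Sigma>. \<delta> q a \<in> Q)"

definition dfa_run :: "'q \<Rightarrow> ('q \<Rightarrow> 'a \<Rightarrow> 'q) \<Rightarrow> 'a list \<Rightarrow> 'q" where
  "dfa_run q0 \<delta> w = foldl \<delta> q0 w"

text \<open>u w^omega \<in> L; the omega-power of the empty word is undefined, so we read the
  membership as false when w is empty.\<close>
definition upw_in :: "'a word set \<Rightarrow> 'a list \<Rightarrow> 'a list \<Rightarrow> bool" where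
  "upw_in L u w \<longleftrightarrow> w \<noteq> [] \<and> u \<frown> (w\<^sup>\<omega>) \<in> L"

definition approx_P :: "'a set \<Rightarrow> 'a word set \<Rightarrow> 'a list \<Rightarrow> ('a list \<times> 'a list) set" where
  "approx_P \<Sigma> L u = {(x, y). x \<in> lists \<Sigma> \<and> y \<in> lists \<Sigma> \<and>
      (\<forall>v \<in> lists \<Sigma>. upw_in L u (x @ v) \<longleftrightarrow> upw_in L u (y @ v))}"

definition approx_R' :: "'a set \<Rightarrow> 'a word set \<Rightarrow> 'q \<Rightarrow> ('q \<Rightarrow> 'a \<Rightarrow> 'q) \<Rightarrow> 'a list
    \<Rightarrow> ('a list \<times> 'a list) set" where
  "approx_R' \<Sigma> L q0 \<delta> u = {(x, y). x \<in> lists \<Sigma> \<and> y \<in> lists \<Sigma> \<and>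
      (\<forall>v \<in> lists \<Sigma>.
         (dfa_run q0 \<delta> (u @ x @ v) = dfa_run q0 \<delta> u \<and> upw_in L u (x @ v)) \<longleftrightarrow>
         (dfa_run q0 \<delta> (u @ y @ v) = dfa_run q0 \<delta> u \<and> upw_in L u (y @ v)))}"

definition eq_index :: "'b set \<Rightarrow> ('b \<times> 'b) set \<Rightarrow> enat" where
  "eq_index A R = (if finite (A // R) then enat (card (A // R)) else \<infinity>)"

end

theory Submission
  imports Defs
begin

lemma equiv_R': "equiv (lists \<Sigma>) (approx_R' \<Sigma> L q0 \<delta> u)"
  unfolding equiv_def refl_on_def sym_def trans_def approx_R'_def by auto

lemma P_refl: "x \<in> lists \<Sigma> \<Longrightarrow> (x, x) \<in> approx_P \<Sigma> L u"
  unfolding approx_P_def by auto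

lemma key:
  assumes "x \<in> lists \<Sigma>" "y \<in> lists \<Sigma>"
    and "dfa_run q0 \<delta> (u @ x) = dfa_run q0 \<delta> (u @ y)"
    and "approx_P \<Sigma> L u `` {x} = approx_P \<Sigma> L u `` {y}"
  shows "(x, y) \<in> approx_R' \<Sigma> L q0 \<delta> u"
proof -
  have "y \<in> approx_P \<Sigma> L u `` {x}" using assms(4) P_refl[OF assms(2)] by auto
  hence P: "(x, y) \<in> approx_P \<Sigma> L u" by auto
  have run: "\<And>v. dfa_run q0 \<delta> (u @ x @ v) = dfa_run q0 \<delta> (u @ y @ v)"
    using assms(3) unfolding dfa_run_def
    by (metis append_assoc foldl_append)
  show ?thesis using P run assms(1,2) unfolding approx_R'_def approx_P_def by auto
qed

theorem lemma12:
  fixes \<Sigma> :: "'a set" and L :: "'a word set"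
    and Q :: "'q set" and q0 :: 'q and \<delta> :: "'q \<Rightarrow> 'a \<Rightarrow> 'q" and u :: "'a list"
  assumes "omega_regular \<Sigma> L"
    and "complete_dfa \<Sigma> Q q0 \<delta>"
    and "u \<in> lists \<Sigma>"
  shows "eq_index (lists \<Sigma>) (approx_R' \<Sigma> L q0 \<delta> u)
           \<le> enat (card Q) * eq_index (lists \<Sigma>) (approx_P \<Sigma> L u)"
proof -
  let ?A = "lists \<Sigma>"
  let ?R = "approx_R' \<Sigma> L q0 \<delta> u"
  let ?P = "approx_P \<Sigma> L u"
  have finQ: "finite Q" and q0Q: "q0 \<in> Q" and dQ: "\<forall>q\<in>Q. \<forall>a\<in>\<Sigma>. \<delta> q a \<in> Q"
    using assms(2) unfolding complete_dfa_def by auto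
  have cardQ: "card Q > 0" using finQ q0Q card_gt_0_iff by blast
  have runQ: "\<And>w q. q \<in> Q \<Longrightarrow> w \<in> lists \<Sigma> \<Longrightarrow> foldl \<delta> q w \<in> Q"
  proof -
    fix w q assume "q \<in> Q" "w \<in> lists \<Sigma>"
    thus "foldl \<delta> q w \<in> Q" using dQ by (induction w arbitrary: q) auto
  qed
  define f where "f x = (dfa_run q0 \<delta> (u @ x), ?P `` {x})" for x
  have fA: "f ` ?A \<subseteq> Q \<times> (?A // ?P)"
  proof
    fix z assume "z \<in> f ` ?A"
    then obtain x where x: "x \<in> ?A" "z = f x" by auto
    have "dfa_run q0 \<delta> (u @ x) \<in> Q" unfolding dfa_run_def
      using runQ[OF runQ[OF q0Q assms(3)] x(1)] by simp
    moreover have "?P `` {x} \<in> ?A // ?P" using x(1) by (auto intro: quotientI)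
    ultimately show "z \<in> Q \<times> (?A // ?P)" using x(2) f_def by auto
  qed
  have eq: "?A // ?R = (\<lambda>z. ?R `` {inv_into ?A f z}) ` (f ` ?A)"
  proof -
    have "?R `` {inv_into ?A f (f x)} = ?R `` {x}" if "x \<in> ?A" for x
    proof -
      have i: "inv_into ?A f (f x) \<in> ?A" "f (inv_into ?A f (f x)) = f x"
        using that by (simp_all add: inv_into_into f_inv_into_f)
      have "(inv_into ?A f (f x), x) \<in> ?R"
        using key[OF i(1) that] i(2) unfolding f_def by auto
      thus ?thesis by (rule equiv_class_eq[OF equiv_R'])
    qed
    hence h: "\<And>x. x \<in> ?A \<Longrightarrow> ?R `` {inv_into ?A f (f x)} = ?R `` {x}" .
    have "?A // ?R = (\<lambda>x. ?R `` {x}) ` ?A" unfolding quotient_def by auto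
    also have "\<dots> = (\<lambda>x. ?R `` {inv_into ?A f (f x)}) ` ?A"
      using h by (intro image_cong) auto
    also have "\<dots> = (\<lambda>z. ?R `` {inv_into ?A f z}) ` (f ` ?A)"
      by (simp add: image_image)
    finally show ?thesis .
  qed
  show ?thesis
  proof (cases "finite (?A // ?P)")
    case False
    thus ?thesis using cardQ unfolding eq_index_def by simp
  next
    case True
    have finf: "finite (f ` ?A)" using fA finQ True finite_subset by blast
    have finR: "finite (?A // ?R)" using eq finf by simp
    have "card (?A // ?R) \<le> card (f ` ?A)" using eq card_image_le finf by metis
    also have "\<dots> \<le> card (Q \<times> (?A // ?P))"
      using fA finQ True by (intro card_mono) auto
    also have "\<dots> = card Q * card (?A // ?P)" by (simp add: card_cartesian_product)
    finally show ?thesis using True finR unfolding eq_index_def by simp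
  qed
qed

end
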